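(* Let $R$ be a local ring and $s\in R$ a central element. Then $A\in M_2(R;s)$ is strongly clean if and only if one of the following holds: (1) $A\in U\big(M_2(R;s)\big)$; (2) $I_2-A\in U\big(M_2(R;s)\big)$; (3) $A$ is similar to $\left[\begin{smallmatrix} a&0\\ 0&b\end{smallmatrix}\right]$ for some $a,b\in R$.
   Context: All rings are associative with identity. A ring $R$ is local if $R/J(R)$ is a division ring, where $J(R)$ is the Jacobson radical; $U(T)$ is the group of units of a ring $T$. For a ring $R$ and a central element $s\in R$, $M_2(R;s)$ denotes the ring whose elements are the $2\times 2$ arrays $\left[\begin{smallmatrix} a&b\\ c&d\end{smallmatrix}\right]$ with $a,b,c,d\in R$, with componentwise addition and multiplication $\left[\begin{smallmatrix} a&b\\ c&d\end{smallmatrix}\right]\left[\begin{smallmatrix} a'&b'\\ c'&d'\end{smallmatrix}\right]=\left[\begin{smallmatrix} aa'+s^2bc'&ab'+bd'\\ ca'+dc'&s^2cb'+dd'\end{smallmatrix}\right]$, with identity $I_2$. Two elements $A,B\in M_2(R;s)$ are similar if $B=P^{-1}AP$ for some unit $P$ of $M_2(R;s)$. An element $a$ of a ring $T$ is strongly clean if there is an idempotent $e\in T$ with $ae=ea$ and $a-e\in U(T)$. *)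

theory Defs
  imports Main
begin

definition left_ideal :: "'a::ring_1 set \<Rightarrow> bool" where
  "left_ideal I \<longleftrightarrow> 0 \<in> I \<and> (\<forall>x\<in>I. \<forall>y\<in>I. x + y \<in> I) \<and> (\<forall>x\<in>I. - x \<in> I)
     \<and> (\<forall>r. \<forall>x\<in>I. r * x \<in> I)"

definition maximal_left_ideal :: "'a::ring_1 set \<Rightarrow> bool" where
  "maximal_left_ideal I \<longleftrightarrow> left_ideal I \<and> I \<noteq> UNIV \<and>
     (\<forall>K. left_ideal K \<and> I \<subseteq> K \<longrightarrow> K = I \<or> K = UNIV)"

definition jacobson :: "'a::ring_1 set" where
  "jacobson = \<Inter> {I. maximal_left_ideal I}"

text \<open>R is local iff R/J(R) is a division ring: the quotient is nontrivial and
  every nonzero coset has a two-sided inverse modulo J(R).\<close>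
definition local_ring :: "'a::ring_1 itself \<Rightarrow> bool" where
  "local_ring (_::'a itself) \<longleftrightarrow> (jacobson :: 'a set) \<noteq> UNIV \<and>
     (\<forall>x::'a. x \<notin> jacobson \<longrightarrow> (\<exists>y. x * y - 1 \<in> jacobson \<and> y * x - 1 \<in> jacobson))"

datatype 'a m2 = M2 'a 'a 'a 'a

fun m2_mult :: "'a::ring_1 \<Rightarrow> 'a m2 \<Rightarrow> 'a m2 \<Rightarrow> 'a m2" where
  "m2_mult s (M2 a b c d) (M2 a' b' c' d') =
     M2 (a*a' + s^2*b*c') (a*b' + b*d') (c*a' + d*c') (s^2*c*b' + d*d')"

fun m2_sub :: "'a::ring_1 m2 \<Rightarrow> 'a m2 \<Rightarrow> 'a m2" where
  "m2_sub (M2 a b c d) (M2 a' b' c' d') = M2 (a - a') (b - b') (c - c') (d - d')"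

definition I2 :: "'a::ring_1 m2" where
  "I2 = M2 1 0 0 1"

definition m2_unit :: "'a::ring_1 \<Rightarrow> 'a m2 \<Rightarrow> bool" where
  "m2_unit s P \<longleftrightarrow> (\<exists>Q. m2_mult s P Q = I2 \<and> m2_mult s Q P = I2)"

definition m2_similar :: "'a::ring_1 \<Rightarrow> 'a m2 \<Rightarrow> 'a m2 \<Rightarrow> bool" where
  "m2_similar s A B \<longleftrightarrow> (\<exists>P Q. m2_mult s P Q = I2 \<and> m2_mult s Q P = I2 \<and>
      B = m2_mult s (m2_mult s Q A) P)"

definition m2_strongly_clean :: "'a::ring_1 \<Rightarrow> 'a m2 \<Rightarrow> bool" where
  "m2_strongly_clean s A \<longleftrightarrow> (\<exists>E. m2_mult s E E = E \<and> m2_mult s A E = m2_mult s E A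
      \<and> m2_unit s (m2_sub A E))"

end

theory Submission
  imports Defs
begin


definition un :: "'a::ring_1 \<Rightarrow> bool" where "un x \<longleftrightarrow> (\<exists>y. x*y = 1 \<and> y*x = 1)"

lemma li_univ: "left_ideal I \<Longrightarrow> (1::'a::ring_1) \<in> I \<Longrightarrow> I = UNIV"
  unfolding left_ideal_def by (metis UNIV_I UNIV_eq_I mult.right_neutral)

lemma jac_mult: "x \<in> jacobson \<Longrightarrow> r * x \<in> jacobson"
  unfolding jacobson_def maximal_left_ideal_def left_ideal_def by auto
lemma jac_neg: "x \<in> jacobson \<Longrightarrow> - x \<in> jacobson"
  unfolding jacobson_def maximal_left_ideal_def left_ideal_def by auto

lemma exists_max:
  assumes L: "left_ideal (L::'a::ring_1 set)" "1 \<notin> L" shows "\<exists>M. maximal_left_ideal M \<and> L \<subseteq> M"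
proof -
  let ?A = "{K. left_ideal K \<and> L \<subseteq> K \<and> (1::'a) \<notin> K}"
  have "\<exists>M\<in>?A. \<forall>X\<in>?A. M \<subseteq> X \<longrightarrow> X = M"
  proof (rule subset_Zorn_nonempty)
    show "?A \<noteq> {}" using assms by auto
    fix C assume C: "C \<noteq> {}" "subset.chain ?A C"
    hence sub: "C \<subseteq> ?A" and ch: "\<forall>X\<in>C. \<forall>Y\<in>C. X \<subseteq> Y \<or> Y \<subseteq> X"
      by (auto simp: subset_chain_def)
    have "left_ideal (\<Union>C)"
      unfolding left_ideal_def
    proof (intro conjI ballI allI)
      show "0 \<in> \<Union>C" using C(1) sub by (auto simp: left_ideal_def)
    next
      fix x y assume "x \<in> \<Union>C" "y \<in> \<Union>C"
      then obtain X Y where XY: "X \<in> C" "Y \<in> C" "x \<in> X" "y \<in> Y" by auto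
      have liX: "left_ideal X" "left_ideal Y" using XY sub by auto
      show "x + y \<in> \<Union>C"
      proof (cases "X \<subseteq> Y")
        case True hence "x \<in> Y" using XY by blast
        hence "x + y \<in> Y" using liX XY unfolding left_ideal_def by blast
        thus ?thesis using XY by blast
      next
        case False hence "Y \<subseteq> X" using ch XY by blast
        hence "y \<in> X" using XY by blast
        hence "x + y \<in> X" using liX XY unfolding left_ideal_def by blast
        thus ?thesis using XY by blast
      qed
    next
      fix x assume "x \<in> \<Union>C"
      thus "- x \<in> \<Union>C" using sub unfolding left_ideal_def by blast
    next
      fix r x assume "x \<in> \<Union>C"
      thus "r * x \<in> \<Union>C" using sub unfolding left_ideal_def by blast
    qed
    moreover have "L \<subseteq> \<Union>C" using C(1) sub by auto
    moreover have "1 \<notin> \<Union>C" using sub by auto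
    ultimately show "\<Union>C \<in> ?A" by simp
  qed
  then obtain M where M: "M \<in> ?A" "\<forall>X\<in>?A. M \<subseteq> X \<longrightarrow> X = M" by blast
  have "maximal_left_ideal M"
    unfolding maximal_left_ideal_def
  proof (intro conjI allI impI)
    show "left_ideal M" using M by simp
    show "M \<noteq> UNIV" using M by auto
    fix K assume K: "left_ideal K \<and> M \<subseteq> K"
    show "K = M \<or> K = UNIV"
    proof (cases "1 \<in> K")
      case True thus ?thesis using li_univ K by blast
    next
      case False thus ?thesis using K M by auto
    qed
  qed
  thus ?thesis using M by auto
qed

lemma left_inv:
  assumes j: "(j::'a::ring_1) \<in> jacobson" shows "\<exists>u. u * (1 + j) = 1"
proof (rule ccontr)
  assume na: "\<not> (\<exists>u. u * (1 + j) = 1)"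
  let ?L = "{r * (1 + j) | r. True}"
  have "left_ideal ?L" unfolding left_ideal_def
  proof (intro conjI ballI allI)
    show "0 \<in> ?L" by (metis (mono_tags, lifting) mem_Collect_eq mult_zero_left)
    fix x y assume "x \<in> ?L" "y \<in> ?L"
    then obtain a b where "x = a*(1+j)" "y = b*(1+j)" by auto
    thus "x + y \<in> ?L" by (metis (mono_tags, lifting) distrib_right mem_Collect_eq)
  next
    fix x assume "x \<in> ?L"
    then obtain a where "x = a*(1+j)" by auto
    thus "- x \<in> ?L" by (metis (mono_tags, lifting) minus_mult_left mem_Collect_eq)
  next
    fix r x assume "x \<in> ?L"
    then obtain a where "x = a*(1+j)" by auto
    thus "r * x \<in> ?L" by (metis (mono_tags, lifting) mult.assoc mem_Collect_eq)
  qed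
  moreover have "1 \<notin> ?L" using na by auto
  ultimately obtain M where M: "maximal_left_ideal M" "?L \<subseteq> M" using exists_max by blast
  have jM: "j \<in> M" using j M(1) unfolding jacobson_def by auto
  have "1 * (1 + j) \<in> ?L" by blast
  hence jM2: "1 + j \<in> M" using M(2) by auto
  have liM: "left_ideal M" using M(1) unfolding maximal_left_ideal_def by blast
  have "- j \<in> M" using liM jM unfolding left_ideal_def by blast
  hence "(1 + j) + - j \<in> M" using liM jM2 unfolding left_ideal_def by blast
  hence "1 \<in> M" by simp
  thus False using M(1) li_univ unfolding maximal_left_ideal_def by blast
qed

lemma unit_1j:
  assumes j: "(j::'a::ring_1) \<in> jacobson" shows "un (1 + j)"
proof -
  obtain u where u: "u * (1 + j) = 1" using left_inv j by blast
  have "u = 1 + - (u * j)" using u by (simp add: algebra_simps)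
  moreover have "- (u*j) \<in> jacobson" using j jac_mult jac_neg by blast
  ultimately obtain v where v: "v * u = 1" using left_inv by metis
  have "v = v * u * (1 + j)" using u by (simp add: mult.assoc)
  hence "v = 1 + j" using v by simp
  thus ?thesis using u v unfolding un_def by blast
qed

lemma un_mult_inv:
  assumes "un (x*y)" "un (y*x)" shows "un (x::'a::ring_1)"
proof -
  obtain p where p: "x*y*p = 1" using assms(1) un_def by blast
  obtain q where q: "q*(y*x) = 1" using assms(2) un_def by blast
  have "q*y = q*y*(x*(y*p))" using p by (simp add: mult.assoc)
  also have "\<dots> = (q*(y*x))*(y*p)" by (simp add: mult.assoc)
  finally have "q*y = y*p" using q by simp
  thus ?thesis using p q unfolding un_def by (metis mult.assoc)
qed

lemma local_dich:
  assumes "local_ring TYPE('a::ring_1)" shows "un (x::'a) \<or> un (1 - x)"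
proof (cases "x \<in> jacobson")
  case True
  hence "un (1 + - x)" using unit_1j jac_neg by blast
  thus ?thesis by simp
next
  case False
  then obtain y where y: "x*y - 1 \<in> jacobson" "y*x - 1 \<in> jacobson"
    using assms unfolding local_ring_def by blast
  have "un (1 + (x*y-1))" "un (1 + (y*x - 1))" using y unit_1j by blast+
  hence "un (x*y)" "un (y*x)" by simp_all
  thus ?thesis using un_mult_inv by blast
qed


lemma s2c: assumes "\<forall>x. s*x = x*s" shows "x * s^2 = s^2 * (x::'a::ring_1)"
  using assms by (metis mult.assoc power2_eq_square)

lemma m2_mult_t: "t = s^2 \<Longrightarrow> m2_mult s (M2 a b c d) (M2 a' b' c' d') =
     M2 (a*a' + t*b*c') (a*b' + b*d') (c*a' + d*c') (t*c*b' + d*d')"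
  by simp

lemma m2_assoc:
  assumes sc: "\<forall>x. s*x = x*s"
  shows "m2_mult s (m2_mult s X Y) Z = m2_mult s X (m2_mult s Y (Z::'a::ring_1 m2))"
proof -
  define t where "t = s^2"
  have c1: "x * t = t * x" "x * (t * y) = t * (x * y)" for x y 
    using s2c[OF sc] unfolding t_def by (metis mult.assoc)+
  obtain a b c d where X: "X = M2 a b c d" by (cases X)
  obtain a1 b1 c1 d1 where Y: "Y = M2 a1 b1 c1 d1" by (cases Y)
  obtain a2 b2 c2 d2 where Z: "Z = M2 a2 b2 c2 d2" by (cases Z)
  show ?thesis unfolding X Y Z by (simp only: m2_mult_t[OF t_def]) (simp add: algebra_simps c1)
qed

lemma m2_I_left[simp]: "m2_mult s I2 X = (X::'a::ring_1 m2)"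
  by (cases X) (simp add: I2_def)
lemma m2_I_right[simp]: "m2_mult s X I2 = (X::'a::ring_1 m2)"
  by (cases X) (simp add: I2_def)

lemma m2_sub_left: "m2_mult s (m2_sub X Y) Z = m2_sub (m2_mult s X Z) (m2_mult s Y (Z::'a::ring_1 m2))"
  by (cases X; cases Y; cases Z) (simp add: algebra_simps)
lemma m2_sub_right: 
  assumes sc: "\<forall>x. s*x = x*s"
  shows "m2_mult s Z (m2_sub X Y) = m2_sub (m2_mult s Z X) (m2_mult s Z (Y::'a::ring_1 m2))"
proof -
  define t where "t = s^2"
  have c1: "x * t = t * x" "x * (t * y) = t * (x * y)" for x y 
    using s2c[OF sc] unfolding t_def by (metis mult.assoc)+
  show ?thesis by (cases X; cases Y; cases Z) (simp only: m2_mult_t[OF t_def] m2_sub.simps; simp add: algebra_simps c1)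
qed

lemma U1:
  assumes sc: "\<forall>x. s*x = x*s" and a: "a*a' = 1" "a'*a = 1"
    and dl: "(d - s^2*c*a'*b) * dl = 1" "dl * (d - s^2*c*a'*b) = (1::'a::ring_1)"
  shows "m2_unit s (M2 a b c d)"
proof -
  define t where "t = s^2"
  have cc: "x * t = t * x" "x * (t * y) = t * (x * y)" for x y 
    using s2c[OF sc] unfolding t_def by (metis mult.assoc)+
  define \<delta> where "\<delta> = d - t*c*a'*b"
  have d: "d = \<delta> + t*c*(a'*b)" unfolding \<delta>_def by (simp add: mult.assoc)
  have dl': "\<delta> * dl = 1" "dl * \<delta> = 1" using dl unfolding \<delta>_def t_def by auto
  have a2: "a * (a' * x) = x" "a' * (a * x) = x" "\<delta> * (dl * x) = x" "dl * (\<delta> * x) = x" for x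
    using a dl' by (simp_all add: mult.assoc[symmetric])
  let ?Q = "M2 (a' + t*a'*b*dl*c*a') (-(a'*b*dl)) (-(dl*c*a')) dl"
  have "m2_mult s (M2 a b c d) ?Q = I2"
    unfolding d I2_def by (simp only: m2_mult_t[OF t_def]) (simp add: algebra_simps cc a a2 dl')
  moreover have "m2_mult s ?Q (M2 a b c d) = I2"
    unfolding d I2_def by (simp only: m2_mult_t[OF t_def]) (simp add: algebra_simps cc a a2 dl')
  ultimately show ?thesis unfolding m2_unit_def by blast
qed



abbreviation Z2 :: "'a::ring_1 m2" where "Z2 \<equiv> M2 0 0 0 0"

lemma idem_unit:
  assumes sc: "\<forall>x. s*x = x*s" and EE: "m2_mult s E E = E" and u: "m2_unit s (E::'a::ring_1 m2)"
  shows "E = I2"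
proof -
  obtain Q where Q: "m2_mult s E Q = I2" using u unfolding m2_unit_def by blast
  have "E = m2_mult s E (m2_mult s E Q)" using Q by simp
  also have "\<dots> = m2_mult s (m2_mult s E E) Q" using m2_assoc[OF sc] by simp
  also have "\<dots> = I2" using EE Q by simp
  finally show ?thesis .
qed

lemma idem_eqs:
  assumes "m2_mult s (M2 e f g h) (M2 e f g h) = M2 e f g (h::'a::ring_1)"
  shows "e*e + s^2*f*g = e" "e*f + f*h = f" "g*e + h*g = g" "s^2*g*f + h*h = h"
  using assms by simp_all

lemma idem_conj:
  assumes sc: "\<forall>x. s*x = x*s" and loc: "local_ring TYPE('a::ring_1)"
    and E: "E = M2 e f g (h::'a)" and EE: "m2_mult s E E = E" and nI: "E \<noteq> I2"
    and a: "e*e' = 1" "e'*e = 1"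
  shows "\<exists>P Q. m2_mult s P Q = I2 \<and> m2_mult s Q P = I2 \<and> m2_mult s E P = m2_mult s P (M2 1 0 0 0)"
proof -
  define \<sigma> where "\<sigma> = h - s^2*g*e'*f"
  have "\<not> un \<sigma>"
  proof
    assume "un \<sigma>"
    then obtain y where "\<sigma>*y = 1" "y*\<sigma> = 1" unfolding un_def by blast
    hence "m2_unit s E" unfolding E using U1[OF sc a, of h g f y] unfolding \<sigma>_def by blast
    thus False using idem_unit[OF sc EE] nI by blast
  qed
  hence "un (1 - \<sigma>)" using local_dich[OF loc] by blast
  then obtain y where y: "(1-\<sigma>)*y = 1" "y*(1-\<sigma>) = 1" unfolding un_def by blast
  have eq: "(1-h) - s^2*g*e'*(-f) = 1 - \<sigma>" unfolding \<sigma>_def by (simp add: algebra_simps)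
  have "m2_unit s (M2 e (-f) g (1-h))" using U1[OF sc a, of "1-h" g "-f" y] y unfolding eq by blast
  then obtain Q where Q: "m2_mult s (M2 e (-f) g (1-h)) Q = I2" "m2_mult s Q (M2 e (-f) g (1-h)) = I2"
    unfolding m2_unit_def by blast
  note eqs = idem_eqs[OF EE[unfolded E]]
  have e2: "e*(-f) + f*(1-h) = f - (e*f + f*h)" "s^2*g*(-f) + h*(1-h) = h - (s^2*g*f + h*h)"
    by (simp_all add: algebra_simps)
  have "m2_mult s E (M2 e (-f) g (1-h)) = m2_mult s (M2 e (-f) g (1-h)) (M2 1 0 0 0)"
    unfolding E m2_mult.simps using e2 eqs by simp
  thus ?thesis using Q by blast
qed

lemma diag1:
  assumes "m2_mult s B (M2 1 0 0 0) = m2_mult s (M2 1 0 0 0) (B::'a::ring_1 m2)"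
  shows "\<exists>a b. B = M2 a 0 0 b"
  using assms by (cases B) auto

lemma diag2:
  assumes "m2_mult s B (M2 0 0 0 1) = m2_mult s (M2 0 0 0 1) (B::'a::ring_1 m2)"
  shows "\<exists>a b. B = M2 a 0 0 b"
  using assms by (cases B) auto

lemma conj_comm:
  assumes sc: "\<forall>x. s*x = x*s" and AE: "m2_mult s A E = m2_mult s E (A::'a::ring_1 m2)"
    and PQ: "m2_mult s P Q = I2" "m2_mult s Q P = I2" and EP: "m2_mult s E P = m2_mult s P D"
  shows "m2_mult s (m2_mult s (m2_mult s Q A) P) D = m2_mult s D (m2_mult s (m2_mult s Q A) P)"
proof -
  note as = m2_assoc[OF sc]
  have D: "D = m2_mult s Q (m2_mult s E P)"
    using EP PQ as by (metis m2_I_left)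
  have "m2_mult s (m2_mult s (m2_mult s Q A) P) D = m2_mult s Q (m2_mult s A (m2_mult s E P))"
    using EP as by simp
  also have "\<dots> = m2_mult s Q (m2_mult s E (m2_mult s A P))"
    using AE as by (metis)
  also have "\<dots> = m2_mult s Q (m2_mult s E (m2_mult s (m2_mult s P Q) (m2_mult s A P)))"
    using PQ by simp
  also have "\<dots> = m2_mult s D (m2_mult s (m2_mult s Q A) P)"
    unfolding D using as by simp
  finally show ?thesis .
qed

lemma diag_unit: "un x \<Longrightarrow> un y \<Longrightarrow> m2_unit s (M2 x 0 0 (y::'a::ring_1))"
  unfolding un_def m2_unit_def I2_def
  by (elim exE conjE) (rule_tac x="M2 _ 0 0 _" in exI, simp)

lemma choose_e:
  assumes "local_ring TYPE('a::ring_1)" shows "\<exists>e. (e = 0 \<or> e = 1) \<and> un ((a::'a) - e)"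
proof (cases "un a")
  case True thus ?thesis by (intro exI[of _ 0]) simp
next
  case False
  hence "un (1 - a)" using local_dich[OF assms] by blast
  then obtain y where "(1-a)*y = 1" "y*(1-a) = 1" unfolding un_def by blast
  hence "(a - 1)*(-y) = 1" "(-y)*(a-1) = 1" by (simp_all add: algebra_simps)
  thus ?thesis unfolding un_def by (intro exI[of _ 1]) blast
qed

lemma diag_sc:
  assumes "local_ring TYPE('a::ring_1)" shows "m2_strongly_clean s (M2 a 0 0 (b::'a))"
proof -
  obtain e1 where e1: "e1 = 0 \<or> e1 = 1" "un (a - e1)" using choose_e[OF assms] by blast
  obtain e2 where e2: "e2 = 0 \<or> e2 = 1" "un (b - e2)" using choose_e[OF assms] by blast
  have "m2_mult s (M2 e1 0 0 e2) (M2 e1 0 0 e2) = M2 e1 0 0 e2" using e1 e2 by auto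
  moreover have "m2_mult s (M2 a 0 0 b) (M2 e1 0 0 e2) = m2_mult s (M2 e1 0 0 e2) (M2 a 0 0 b)"
    using e1 e2 by auto
  moreover have "m2_unit s (m2_sub (M2 a 0 0 b) (M2 e1 0 0 e2))" using diag_unit e1 e2 by simp
  ultimately show ?thesis unfolding m2_strongly_clean_def by blast
qed

lemma sim_sc:
  assumes sc: "\<forall>x. s*x = x*s" and sim: "m2_similar s A B" and B: "m2_strongly_clean s (B::'a::ring_1 m2)"
  shows "m2_strongly_clean s A"
proof -
  note as = m2_assoc[OF sc]
  obtain P Q where PQ: "m2_mult s P Q = I2" "m2_mult s Q P = I2" and BA: "B = m2_mult s (m2_mult s Q A) P"
    using sim unfolding m2_similar_def by blast
  have PQX: "m2_mult s P (m2_mult s Q X) = X" "m2_mult s Q (m2_mult s P X) = X" for X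
    using PQ as by (metis m2_I_left)+
  obtain F where F: "m2_mult s F F = F" "m2_mult s B F = m2_mult s F B" "m2_unit s (m2_sub B F)"
    using B unfolding m2_strongly_clean_def by blast
  obtain U where U: "m2_mult s (m2_sub B F) U = I2" "m2_mult s U (m2_sub B F) = I2"
    using F(3) unfolding m2_unit_def by blast
  have A: "A = m2_mult s P (m2_mult s B Q)" unfolding BA using as PQX PQ by simp
  define E where "E = m2_mult s P (m2_mult s F Q)"
  have FX: "m2_mult s F (m2_mult s F X) = m2_mult s F X" "m2_mult s B (m2_mult s F X) = m2_mult s F (m2_mult s B X)"
    "m2_mult s (m2_sub B F) (m2_mult s U X) = X" "m2_mult s U (m2_mult s (m2_sub B F) X) = X" for X
    using F(1,2) U as by (metis m2_I_left)+
  have "m2_mult s E E = E" unfolding E_def using as PQX F(1) by (simp add: FX)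
  moreover have "m2_mult s A E = m2_mult s E A"
    unfolding E_def A using as PQX F(2) by (simp add: FX)
  moreover have "m2_sub A E = m2_mult s P (m2_mult s (m2_sub B F) Q)"
    unfolding A E_def m2_sub_left m2_sub_right[OF sc] ..
  moreover have "m2_unit s (m2_mult s P (m2_mult s (m2_sub B F) Q))"
  proof -
    have "m2_mult s (m2_mult s P (m2_mult s (m2_sub B F) Q)) (m2_mult s P (m2_mult s U Q)) = I2"
      using as PQX U PQ by (simp add: FX)
    moreover have "m2_mult s (m2_mult s P (m2_mult s U Q)) (m2_mult s P (m2_mult s (m2_sub B F) Q)) = I2"
      using as PQX U PQ by (simp add: FX)
    ultimately show ?thesis unfolding m2_unit_def by blast
  qed
  ultimately show ?thesis unfolding m2_strongly_clean_def by metis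
qed



lemma sub_solve: "m2_sub X Y = Z \<Longrightarrow> Y = m2_sub X (Z::'a::ring_1 m2)"
  by (cases X; cases Y; cases Z) auto

lemma neg_unit:
  assumes "m2_unit s (m2_sub A I2)" shows "m2_unit s (m2_sub I2 (A::'a::ring_1 m2))"
proof -
  obtain a b c d where A: "A = M2 a b c d" by (cases A)
  obtain Q where Q: "m2_mult s (m2_sub A I2) Q = I2" "m2_mult s Q (m2_sub A I2) = I2"
    using assms unfolding m2_unit_def by blast
  obtain x y z w where Qd: "Q = M2 x y z w" by (cases Q)
  have "m2_mult s (m2_sub I2 A) (M2 (-x) (-y) (-z) (-w)) = I2"
    "m2_mult s (M2 (-x) (-y) (-z) (-w)) (m2_sub I2 A) = I2"
    using Q unfolding A Qd I2_def by (simp_all add: algebra_simps)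
  thus ?thesis unfolding m2_unit_def by blast
qed

lemma neg_gen:
  assumes "m2_unit s (M2 a b c d)" shows "m2_unit s (M2 (-a) (-b) (-c) (-d::'a::ring_1))"
proof -
  obtain Q where Q: "m2_mult s (M2 a b c d) Q = I2" "m2_mult s Q (M2 a b c d) = I2"
    using assms unfolding m2_unit_def by blast
  obtain x y z w where Qd: "Q = M2 x y z w" by (cases Q)
  have "m2_mult s (M2 (-a) (-b) (-c) (-d)) (M2 (-x) (-y) (-z) (-w)) = I2"
    "m2_mult s (M2 (-x) (-y) (-z) (-w)) (M2 (-a) (-b) (-c) (-d)) = I2"
    using Q unfolding Qd I2_def by (simp_all add: algebra_simps)
  thus ?thesis unfolding m2_unit_def by blast
qed

theorem corollary2p12:
  fixes s :: "'a::ring_1" and A :: "'a m2"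
  assumes "local_ring TYPE('a)"
    and "\<forall>x. s * x = x * s"
  shows "m2_strongly_clean s A \<longleftrightarrow>
           m2_unit s A \<or> m2_unit s (m2_sub I2 A) \<or>
           (\<exists>a b. m2_similar s A (M2 a 0 0 b))"
proof
  note loc = assms(1) and sc = assms(2)
  note as = m2_assoc[OF sc]
  assume "m2_strongly_clean s A"
  then obtain E where E: "m2_mult s E E = E" "m2_mult s A E = m2_mult s E A" "m2_unit s (m2_sub A E)"
    unfolding m2_strongly_clean_def by blast
  show "m2_unit s A \<or> m2_unit s (m2_sub I2 A) \<or> (\<exists>a b. m2_similar s A (M2 a 0 0 b))"
  proof (cases "E = Z2")
    case True
    have "m2_sub A E = A" unfolding True by (cases A) simp
    thus ?thesis using E(3) by simp
  next
    case nZ: False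
    show ?thesis
    proof (cases "E = I2")
      case True thus ?thesis using E(3) neg_unit by blast
    next
      case nI: False
      obtain e f g h where Ed: "E = M2 e f g h" by (cases E)
      have "un e \<or> un (1 - e)" using local_dich[OF loc] by blast
      thus ?thesis
      proof
        assume "un e"
        then obtain e' where a: "e*e' = 1" "e'*e = 1" unfolding un_def by blast
        obtain P Q where PQ: "m2_mult s P Q = I2" "m2_mult s Q P = I2"
          and EP: "m2_mult s E P = m2_mult s P (M2 1 0 0 0)"
          using idem_conj[OF sc loc Ed E(1) nI a] by blast
        obtain x y where "m2_mult s (m2_mult s Q A) P = M2 x 0 0 y"
          using diag1[OF conj_comm[OF sc E(2) PQ EP]] by blast
        hence "m2_similar s A (M2 x 0 0 y)" unfolding m2_similar_def using PQ by metis
        thus ?thesis by blast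
      next
        assume "un (1 - e)"
        then obtain e' where a: "(1-e)*e' = 1" "e'*(1-e) = 1" unfolding un_def by blast
        define E2 where "E2 = m2_sub I2 E"
        have E2d: "E2 = M2 (1-e) (-f) (-g) (1-h)" unfolding E2_def Ed I2_def by simp
        have zz: "m2_sub X X = Z2" "m2_sub X Z2 = X" for X :: "'a m2" by (cases X; simp)+
        have E2E2: "m2_mult s E2 E2 = E2"
          unfolding E2_def m2_sub_left m2_sub_right[OF sc] using E(1) zz by simp
        have E2nI: "E2 \<noteq> I2"
        proof
          assume "E2 = I2" 
          hence "E = Z2" unfolding E2_def Ed I2_def by simp
          thus False using nZ by blast
        qed
        obtain P Q where PQ: "m2_mult s P Q = I2" "m2_mult s Q P = I2"
          and EP: "m2_mult s E2 P = m2_mult s P (M2 1 0 0 0)"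
          using idem_conj[OF sc loc E2d E2E2 E2nI a] by blast
        have "m2_sub P (m2_mult s E P) = m2_mult s P (M2 1 0 0 0)"
          using EP unfolding E2_def m2_sub_left by simp
        hence "m2_mult s E P = m2_sub P (m2_mult s P (M2 1 0 0 0))" by (rule sub_solve)
        also have "\<dots> = m2_mult s P (m2_sub I2 (M2 1 0 0 0))"
          unfolding m2_sub_right[OF sc] by simp
        also have "m2_sub I2 (M2 1 0 0 0) = (M2 0 0 0 1 :: 'a m2)" unfolding I2_def by simp
        finally have EP': "m2_mult s E P = m2_mult s P (M2 0 0 0 1)" .
        obtain x y where "m2_mult s (m2_mult s Q A) P = M2 x 0 0 y"
          using diag2[OF conj_comm[OF sc E(2) PQ EP']] by blast
        hence "m2_similar s A (M2 x 0 0 y)" unfolding m2_similar_def using PQ by metis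
        thus ?thesis by blast
      qed
    qed
  qed
next
  note loc = assms(1) and sc = assms(2)
  assume h: "m2_unit s A \<or> m2_unit s (m2_sub I2 A) \<or> (\<exists>a b. m2_similar s A (M2 a 0 0 b))"
  show "m2_strongly_clean s A"
  proof (cases "m2_unit s A")
    case True
    have "m2_sub A Z2 = A" "m2_mult s Z2 Z2 = Z2" "m2_mult s A Z2 = m2_mult s Z2 A" by (cases A; simp)+
    thus ?thesis using True unfolding m2_strongly_clean_def by metis
  next
    case False
    show ?thesis
    proof (cases "m2_unit s (m2_sub I2 A)")
      case True
      have "m2_unit s (m2_sub A I2)"
        using True neg_gen by (cases A) (fastforce simp add: I2_def)
      moreover have "m2_mult s I2 I2 = (I2::'a m2)" by simp
      ultimately show ?thesis unfolding m2_strongly_clean_def by (metis m2_I_left m2_I_right)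
    next
      case False
      then obtain a b where "m2_similar s A (M2 a 0 0 b)" using h \<open>\<not> m2_unit s A\<close> by blast
      thus ?thesis using sim_sc[OF sc] diag_sc[OF loc] by blast
    qed
  qed
qed


end
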